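(* For all integers $0\le k\le n$, $$\binom{n}{k}_F\equiv \begin{cases} 0 & \text{if } n\equiv 0 \pmod 3 \text{ and } k\equiv 1\pmod 3,\\[4pt] \dbinom{\lceil 2n/3\rceil}{\lceil 2k/3\rceil} & \text{if } n\equiv 1 \pmod 3 \text{ and } k\equiv 0\pmod 3,\\[8pt] \dbinom{\lfloor 2n/3\rfloor}{\lfloor 2k/3\rfloor} & \text{otherwise}, \end{cases} \pmod 2,$$ where $\binom{a}{b}$ denotes the ordinary binomial coefficient (equal to $0$ if $b<0$ or $b>a$), and $\lceil\cdot\rceil,\lfloor\cdot\rfloor$ are the ceiling and floor functions.
   Context: The Fibonacci numbers are defined by $F_0=0$, $F_1=1$, $F_n=F_{n-1}+F_{n-2}$ for $n\ge 2$. For $n\ge 0$ let $n!_F=F_1F_2\cdots F_n$ (with $0!_F=1$), and for $0\le k\le n$ define the Fibonomial coefficient $\binom{n}{k}_F=\dfrac{n!_F}{k!_F\,(n-k)!_F}$; by convention $\binom{n}{k}_F=0$ if $k<0$ or $k>n$. *)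

theory Defs
  imports Complex_Main
begin

fun fibo :: "nat \<Rightarrow> nat" where
  "fibo 0 = 0"
| "fibo (Suc 0) = 1"
| "fibo (Suc (Suc n)) = fibo (Suc n) + fibo n"

definition fibfact :: "nat \<Rightarrow> nat" where
  "fibfact n = (\<Prod>i=1..n. fibo i)"

text \<open>Fibonomial coefficient n!_F / (k!_F (n-k)!_F) for k \<le> n, and 0 otherwise.
  The quotient is an integer (classical), so nat division is exact.\<close>
definition fibonomial :: "nat \<Rightarrow> nat \<Rightarrow> nat" where
  "fibonomial n k = (if k \<le> n then fibfact n div (fibfact k * fibfact (n - k)) else 0)"

end

theory Submission
  imports Defs
begin

fun G :: "nat \<Rightarrow> nat \<Rightarrow> nat" where
  "G n 0 = 1"
| "G 0 (Suc k) = 0"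
| "G (Suc n) (Suc k) = fibo k * G n (Suc k) + fibo (Suc (n - k)) * G n k"

lemma G_zero: "n < k \<Longrightarrow> G n k = 0"
proof (induction n arbitrary: k)
  case 0 then show ?case by (cases k) auto
next
  case (Suc n) then show ?case by (cases k) auto
qed

lemma fibo_add: "fibo (m + j + 1) = fibo (m+1) * fibo (j+1) + fibo m * fibo j"
proof (induction m rule: nat_less_induct)
  case (1 m)
  show ?case
  proof (cases m)
    case 0 then show ?thesis by simp
  next
    case (Suc m1)
    show ?thesis
    proof (cases m1)
      case 0 then show ?thesis using Suc by (cases j) auto
    next
      case (Suc m2)
      have h1: "fibo (m1 + j + 1) = fibo (m1+1) * fibo (j+1) + fibo m1 * fibo j"
        using 1 \<open>m = Suc m1\<close> by auto
      have h2: "fibo (m2 + j + 1) = fibo (m2+1) * fibo (j+1) + fibo m2 * fibo j"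
        using 1 \<open>m = Suc m1\<close> Suc by auto
      have "fibo (m + j + 1) = fibo (m1 + j + 1) + fibo (m2 + j + 1)"
        using \<open>m = Suc m1\<close> Suc by (simp add: add.commute)
      also have "\<dots> = fibo (m+1) * fibo (j+1) + fibo m * fibo j"
        unfolding h1 h2 using \<open>m = Suc m1\<close> Suc by (simp add: algebra_simps)
      finally show ?thesis .
    qed
  qed
qed

lemma fibfact_Suc: "fibfact (Suc n) = fibo (Suc n) * fibfact n"
  unfolding fibfact_def by (simp add: prod.nat_ivl_Suc' mult.commute)

lemma fibo_pos: "0 < n \<Longrightarrow> 0 < fibo n"
proof (induction n rule: fibo.induct)
  case (3 n) then show ?case by (cases n) auto
qed auto

lemma fibfact_pos: "0 < fibfact n"
  unfolding fibfact_def by (auto intro!: prod_pos fibo_pos)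

lemma G_fact: "k \<le> n \<Longrightarrow> G n k * fibfact k * fibfact (n - k) = fibfact n"
proof (induction n arbitrary: k)
  case 0 then show ?case by (simp add: fibfact_def)
next
  case (Suc n)
  show ?case
  proof (cases k)
    case 0 then show ?thesis by (simp add: fibfact_def)
  next
    case (Suc k')
    have kn: "k' \<le> n" using Suc.prems Suc by simp
    have T2: "fibo (Suc (n - k')) * G n k' * fibfact (Suc k') * fibfact (n - k')
        = fibo (Suc (n - k')) * fibo (Suc k') * fibfact n"
      using Suc.IH[OF kn] by (simp add: fibfact_Suc algebra_simps)
    show ?thesis
    proof (cases "k' = n")
      case True
      then show ?thesis using T2 Suc by (simp add: G_zero fibfact_Suc algebra_simps)
    next
      case False
      then have kn2: "Suc k' \<le> n" using kn by simp
      have e: "n - k' = Suc (n - Suc k')" using kn2 by simp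
      have T1: "fibo k' * G n (Suc k') * fibfact (Suc k') * fibfact (n - k')
          = fibo k' * fibo (n - k') * fibfact n"
        using Suc.IH[OF kn2] unfolding e fibfact_Suc by (simp add: algebra_simps)
      have F: "fibo (Suc n) = fibo (Suc k') * fibo (Suc (n - k')) + fibo k' * fibo (n - k')"
        using fibo_add[of k' "n - k'"] kn by simp
      have "G (Suc n) k * fibfact k * fibfact (Suc n - k)
         = fibo k' * G n (Suc k') * fibfact (Suc k') * fibfact (n - k')
           + fibo (Suc (n - k')) * G n k' * fibfact (Suc k') * fibfact (n - k')"
        using Suc by (simp add: algebra_simps)
      also have "\<dots> = fibo (Suc n) * fibfact n" unfolding T1 T2 F by (simp add: algebra_simps)
      finally show ?thesis by (simp add: fibfact_Suc)
    qed
  qed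
qed

lemma fibonomial_G: "k \<le> n \<Longrightarrow> fibonomial n k = G n k"
proof -
  assume kn: "k \<le> n"
  have p: "0 < fibfact k * fibfact (n - k)" using fibfact_pos by simp
  show ?thesis unfolding fibonomial_def using kn G_fact[OF kn] p
    by (metis mult.assoc nonzero_mult_div_cancel_right less_numeral_extra(3))
qed

lemma fibo_mod3: "fibo (3*m) mod 2 = 0 \<and> fibo (3*m+1) mod 2 = 1 \<and> fibo (3*m+2) mod 2 = 1"
proof (induction m)
  case 0 then show ?case by simp
next
  case (Suc m)
  have a: "fibo (3*Suc m) = fibo (3*m+2) + fibo (3*m+1)"
    by (simp add: numeral_eq_Suc)
  have b: "fibo (3*Suc m+1) = fibo (3*Suc m) + fibo (3*m+2)"
    by (simp add: numeral_eq_Suc)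
  have c: "fibo (3*Suc m+2) = fibo (3*Suc m+1) + fibo (3*Suc m)"
    by (simp add: numeral_eq_Suc)
  have a': "fibo (3*Suc m) mod 2 = 0"
    unfolding a using Suc.IH by (metis mod_add_eq one_add_one mod_self)
  have b': "fibo (3*Suc m+1) mod 2 = 1"
    unfolding b using Suc.IH a' by (metis mod_add_eq add_0 mod_mod_trivial)
  have c': "fibo (3*Suc m+2) mod 2 = 1"
    unfolding c using a' b' by (metis mod_add_eq add_0_right mod_mod_trivial)
  show ?case using a' b' c' by simp
qed

lemma fibo_mod2: "fibo m mod 2 = (if m mod 3 = 0 then 0 else 1)"
proof -
  obtain q r where m: "m = 3*q + r" and r: "r < 3" by (metis div_mod_decomp mod_less_divisor zero_less_numeral mult.commute)
  then have "r = 0 \<or> r = 1 \<or> r = 2" by auto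
  then show ?thesis using fibo_mod3[of q] m by auto
qed

definition B :: "nat \<Rightarrow> nat \<Rightarrow> nat" where
  "B n k = (if n mod 3 = 0 \<and> k mod 3 = 1 then 0
     else if n mod 3 = 1 \<and> k mod 3 = 0 then ((2*n+2) div 3 choose ((2*k+2) div 3))
     else (2*n div 3 choose (2*k div 3)))"

lemma m3[simp]: "(3*a) mod 3 = (0::nat)" "(3*a+1) mod 3 = (1::nat)" "(3*a+2) mod 3 = (2::nat)"
  "2*(3*a) div 3 = (2*a::nat)" "2*(3*a+1) div 3 = (2*a::nat)" "2*(3*a+2) div 3 = (2*a+1::nat)"
  "(2*(3*a)+2) div 3 = (2*a::nat)" "(2*(3*a+1)+2) div 3 = (2*a+1::nat)" "(2*(3*a+2)+2) div 3 = (2*a+2::nat)"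
  by presburger+

lemma decomp3: obtains a where "n = 3*a" | a where "n = 3*a+1" | a where "n = 3*(a::nat)+2"
proof -
  have "\<exists>a. n = 3*a \<or> n = 3*a+1 \<or> n = 3*(a::nat)+2" by presburger
  then show ?thesis using that by blast
qed

lemma B_val:
  "B (3*a) (3*b) = (2*a choose (2*b))"
  "B (3*a) (3*b+1) = 0"
  "B (3*a) (3*b+2) = (2*a choose (2*b+1))"
  "B (3*a+1) (3*b) = ((2*a+1) choose (2*b))"
  "B (3*a+1) (3*b+1) = (2*a choose (2*b))"
  "B (3*a+1) (3*b+2) = (2*a choose (2*b+1))"
  "B (3*a+2) (3*b) = ((2*a+1) choose (2*b))"
  "B (3*a+2) (3*b+1) = ((2*a+1) choose (2*b))"
  "B (3*a+2) (3*b+2) = ((2*a+1) choose (2*b+1))"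
  unfolding B_def by (simp only: m3; simp)+

lemma B_zero: "B n (Suc n) = 0"
proof (cases n rule: decomp3)
  case (1 a) then have "Suc n = 3*a+1" by simp
  then show ?thesis using 1 by (simp only: B_val)
next
  case (2 a) then have "Suc n = 3*a+2" by simp
  then show ?thesis using 2 by (simp only: B_val) simp
next
  case (3 a) then have "Suc n = 3*(a+1)" by simp
  then show ?thesis using 3 by (simp only: B_val) simp
qed

lemma pascal: "((m+1) choose (j+1)) = (m choose j) + (m choose (j+1))"
  by simp

lemma sucs: "Suc (3*a) = 3*a+1" "Suc (3*a+1) = 3*a+2" "Suc (3*a+2) = 3*(a+1)"
  by simp_all

lemma B_rec0: "B (Suc n) (Suc k) mod 2 = ((if k mod 3 = 0 then 0 else 1) * B n (Suc k)
    + (if Suc n mod 3 = k mod 3 then 0 else 1) * B n k) mod 2"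
  apply (cases n rule: decomp3; cases k rule: decomp3)
  apply (simp_all only: sucs B_val m3)
  apply (simp_all add: pascal ac_simps)
  done

lemma modlem: "((a::nat)*b + c*d) mod 2 = ((a mod 2)*(b mod 2) + (c mod 2)*(d mod 2)) mod 2"
proof -
  have "((a::nat)*b + c*d) mod 2 = ((a*b) mod 2 + (c*d) mod 2) mod 2" by (rule mod_add_eq[symmetric])
  also have "\<dots> = ((a mod 2 * (b mod 2)) mod 2 + (c mod 2 * (d mod 2)) mod 2) mod 2"
    by (simp only: mod_mult_eq)
  also have "\<dots> = ((a mod 2)*(b mod 2) + (c mod 2)*(d mod 2)) mod 2" by (rule mod_add_eq)
  finally show ?thesis .
qed

lemma modlem2: "(x::nat) \<le> 1 \<Longrightarrow> y \<le> 1 \<Longrightarrow> (x*(u mod 2) + y*(v mod 2)) mod 2 = (x*u+y*v) mod 2"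
proof -
  assume "x \<le> 1" "y \<le> 1"
  then have "x mod 2 = x" "y mod 2 = y" by auto
  then show ?thesis using modlem[of x u y v] by simp
qed

lemma G_B: "k \<le> n \<Longrightarrow> G n k mod 2 = B n k mod 2"
proof (induction n arbitrary: k)
  case 0 then show ?case by (simp add: B_def)
next
  case (Suc n)
  show ?case
  proof (cases k)
    case 0 then show ?thesis by (simp add: B_def)
  next
    case (Suc k')
    have kn: "k' \<le> n" using Suc.prems Suc by simp
    have h1: "G n (Suc k') mod 2 = B n (Suc k') mod 2"
    proof (cases "k' < n")
      case True then show ?thesis using Suc.IH by simp
    next
      case False then have "k' = n" using kn by simp
      then show ?thesis by (simp add: G_zero B_zero)
    qed
    have h2: "G n k' mod 2 = B n k' mod 2" using Suc.IH kn by simp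
    have c: "(Suc (n - k') mod 3 = 0) = (Suc n mod 3 = k' mod 3)" using kn by presburger
    have "G (Suc n) (Suc k') mod 2
        = ((fibo k' mod 2) * (G n (Suc k') mod 2) + (fibo (Suc (n - k')) mod 2) * (G n k' mod 2)) mod 2"
      by (subst G.simps(3)) (rule modlem)
    also have "\<dots> = ((fibo k' mod 2) * (B n (Suc k') mod 2) + (fibo (Suc (n - k')) mod 2) * (B n k' mod 2)) mod 2"
      unfolding h1 h2 ..
    also have "\<dots> = ((if k' mod 3 = 0 then 0 else 1) * B n (Suc k')
        + (if Suc n mod 3 = k' mod 3 then 0 else 1) * B n k') mod 2"
      unfolding fibo_mod2 c
      by (rule modlem2) simp_all
    also have "\<dots> = B (Suc n) (Suc k') mod 2" using B_rec0 by simp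
    finally show ?thesis using Suc by simp
  qed
qed

lemma floor_conv: "nat \<lfloor>(2 * real n) / 3\<rfloor> = 2 * n div 3"
proof -
  have "\<lfloor>(2 * real n) / 3\<rfloor> = \<lfloor>real (2*n) / real 3\<rfloor>" by simp
  also have "\<dots> = int (2*n div 3)" by (rule floor_divide_of_nat_eq)
  finally show ?thesis by simp
qed

lemma ceil_conv: "nat \<lceil>(2 * real n) / 3\<rceil> = (2 * n + 2) div 3"
proof (cases n rule: decomp3)
  case (1 a)
  have "\<lceil>(2 * real n) / 3\<rceil> = int (2*a)" by (rule ceiling_unique) (simp_all add: 1)
  then show ?thesis using 1 by simp
next
  case (2 a)
  have "\<lceil>(2 * real n) / 3\<rceil> = int (2*a+1)" by (rule ceiling_unique) (simp_all add: 2 field_simps)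
  then show ?thesis using 2 by simp
next
  case (3 a)
  have "\<lceil>(2 * real n) / 3\<rceil> = int (2*a+2)" by (rule ceiling_unique) (simp_all add: 3 field_simps)
  then show ?thesis using 3 by simp
qed

theorem mainTheorem3:
  fixes n k :: nat
  assumes "k \<le> n"
  shows "fibonomial n k mod 2 =
    (if n mod 3 = 0 \<and> k mod 3 = 1 then 0
     else if n mod 3 = 1 \<and> k mod 3 = 0
       then (nat \<lceil>(2 * real n) / 3\<rceil> choose nat \<lceil>(2 * real k) / 3\<rceil>) mod 2
     else (nat \<lfloor>(2 * real n) / 3\<rfloor> choose nat \<lfloor>(2 * real k) / 3\<rfloor>) mod 2)"
  unfolding fibonomial_G[OF assms] G_B[OF assms] floor_conv ceil_conv B_def
  by simp

end
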